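(* With notation as in the context, for all $1\le i,j\le m+n$ and $1\le r\le\ell$, $$\mu(t^{(r)}_{ij;\mathfrak{b}})=\sum_{1\le s_1<\cdots<s_r\le\ell}\ \sum_{1\le i_1,\dots,i_{r-1}\le m+n}(-1)^{|i|+|i_1|+\cdots+|i_{r-1}|}\,e^{[s_1]}_{i,i_1}e^{[s_2]}_{i_1,i_2}\cdots e^{[s_r]}_{i_{r-1},j}.$$
   Context: Let $m,n,\ell$ be non-negative integers and $\mathfrak{b}=(\mathfrak{b}_1,\dots,\mathfrak{b}_{m+n})$ a sequence with $m$ entries $\delta$ and $n$ entries $\epsilon$; $|i|=\bar0$ if $\mathfrak{b}_i=\delta$, $|i|=\bar1$ if $\mathfrak{b}_i=\epsilon$. Let $\pi$ be a rectangular array of boxes with $m+n$ rows (top to bottom) and $\ell$ columns (left to right), row $i$ of parity $|i|$; for a box $a$ write $\mathrm{row}(a)$, $\mathrm{col}(a)$, $|a|:=|\mathrm{row}(a)|$, and let $i\star c$ be the box in row $i$, column $c$. Let $V=\mathbb{C}^{M|N}$ ($M=m\ell$, $N=n\ell$) have homogeneous basis $\{v_a\}$ indexed by boxes, $v_a$ of parity $|a|$; $\mathfrak{g}=\mathfrak{gl}_{M|N}=\mathrm{End}(V)$ with matrix units $e_{a,b}$. Let $\mathfrak{p}=\mathrm{span}\{e_{a,b}:\mathrm{col}(a)\le\mathrm{col}(b)\}$ and $\mathfrak{h}=\mathrm{span}\{e_{a,b}:\mathrm{col}(a)=\mathrm{col}(b)\}\cong\mathfrak{gl}_{m|n}^{\oplus\ell}$,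 with basis $e^{[c]}_{i,j}:=e_{i\star c,\,j\star c}$. Let $\xi:U(\mathfrak{p})\to U(\mathfrak{h})$ be the algebra homomorphism induced by the projection $\mathfrak{p}\to\mathfrak{h}$ with kernel $\mathrm{span}\{e_{a,b}:\mathrm{col}(a)<\mathrm{col}(b)\}$. For $1\le c\le\ell$ put $\rho_c=-(\ell-c)(m-n)$, and let $\eta:U(\mathfrak{h})\to U(\mathfrak{h})$ be the algebra automorphism with $e^{[c]}_{i,j}\mapsto e^{[c]}_{i,j}-\delta_{ij}(-1)^{|i|}\rho_c$. Set $\mu=\eta\circ\xi$. Let $\tilde e_{a,b}=(-1)^{\mathrm{col}(b)-\mathrm{col}(a)}(e_{a,b}+\delta_{ab}(-1)^{|a|}\rho_{\mathrm{col}(a)})$, and for $1\le r\le\ell$ let $t^{(r)}_{ij;\mathfrak{b}}=\sum_{s=1}^r\sum(-1)^{|a_1|+\cdots+|a_s|}\tilde e_{a_1,b_1}\cdots\tilde e_{a_s,b_s}\in U(\mathfrak{p})$, the inner sum over boxes $a_1,\dots,a_s,b_1,\dots,b_s$ with $\sum_t(\mathrm{col}(b_t)-\mathrm{col}(a_t)+1)=r$; $\mathrm{col}(a_t)\le\mathrm{col}(b_t)$ for all $t$; $\mathrm{col}(b_t)<\mathrm{col}(a_{t+1})$ and $\mathrm{row}(b_t)=\mathrm{row}(a_{t+1})$ for $t<s$; $\mathrm{row}(a_1)=i$, $\mathrm{row}(b_s)=j$. *)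

theory Defs
  imports Main "HOL.Complex"
begin

text \<open>Elements of the free associative algebra on a generator type 'g are
represented as coefficient functions on words; only finitely supported
functions arise.  The product is concatenation-convolution.\<close>

type_synonym 'g fa = "'g list \<Rightarrow> complex"

definition fa_zero :: "'g fa" where "fa_zero = (\<lambda>_. 0)"
definition fa_add :: "'g fa \<Rightarrow> 'g fa \<Rightarrow> 'g fa" where
  "fa_add f g = (\<lambda>w. f w + g w)"
definition fa_smult :: "complex \<Rightarrow> 'g fa \<Rightarrow> 'g fa" where
  "fa_smult c f = (\<lambda>w. c * f w)"
definition fa_sub :: "'g fa \<Rightarrow> 'g fa \<Rightarrow> 'g fa" where
  "fa_sub f g = (\<lambda>w. f w - g w)"
definition fa_mult :: "'g fa \<Rightarrow> 'g fa \<Rightarrow> 'g fa" where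
  "fa_mult f g = (\<lambda>w. \<Sum>k\<le>length w. f (take k w) * g (drop k w))"
definition fa_const :: "complex \<Rightarrow> 'g fa" where
  "fa_const c = (\<lambda>w. if w = [] then c else 0)"
definition fa_word :: "'g list \<Rightarrow> 'g fa" where
  "fa_word u = (\<lambda>w. if w = u then 1 else 0)"
definition fa_gen :: "'g \<Rightarrow> 'g fa" where
  "fa_gen x = fa_word [x]"
definition fa_prod :: "'g fa list \<Rightarrow> 'g fa" where
  "fa_prod xs = foldr fa_mult xs (fa_const 1)"
definition fa_sum :: "('i \<Rightarrow> 'g fa) \<Rightarrow> 'i set \<Rightarrow> 'g fa" where
  "fa_sum F A = (\<lambda>w. \<Sum>a\<in>A. F a w)"

definition fa_hom :: "('g \<Rightarrow> 'h fa) \<Rightarrow> 'g fa \<Rightarrow> 'h fa" where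
  "fa_hom \<phi> f = fa_sum (\<lambda>w. fa_smult (f w) (fa_prod (map \<phi> w))) {w. f w \<noteq> 0}"

inductive_set fa_ideal :: "'g fa set \<Rightarrow> 'g fa set" for R where
  zero: "fa_zero \<in> fa_ideal R"
| gen: "r \<in> R \<Longrightarrow> fa_mult (fa_mult (fa_word u) r) (fa_word v) \<in> fa_ideal R"
| add: "x \<in> fa_ideal R \<Longrightarrow> y \<in> fa_ideal R \<Longrightarrow> fa_add x y \<in> fa_ideal R"
| smult: "x \<in> fa_ideal R \<Longrightarrow> fa_smult c x \<in> fa_ideal R"

text \<open>A box is a pair (row, column). The sequence b is encoded by bb :: nat \<Rightarrow> bool,
with bb i = True iff b_i = epsilon (i.e. |i| = 1).\<close>
type_synonym box = "nat \<times> nat"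

definition row :: "box \<Rightarrow> nat" where "row a = fst a"
definition col :: "box \<Rightarrow> nat" where "col a = snd a"

definition rpar :: "(nat \<Rightarrow> bool) \<Rightarrow> nat \<Rightarrow> nat" where
  "rpar bb i = (if bb i then 1 else 0)"
definition bpar :: "(nat \<Rightarrow> bool) \<Rightarrow> box \<Rightarrow> nat" where
  "bpar bb a = rpar bb (row a)"

definition boxes :: "nat \<Rightarrow> nat \<Rightarrow> nat \<Rightarrow> box set" where
  "boxes m n l = {1..m+n} \<times> {1..l}"

definition pgens :: "nat \<Rightarrow> nat \<Rightarrow> nat \<Rightarrow> (box \<times> box) set" where
  "pgens m n l = {(a,b). a \<in> boxes m n l \<and> b \<in> boxes m n l \<and> col a \<le> col b}"
definition hgens :: "nat \<Rightarrow> nat \<Rightarrow> nat \<Rightarrow> (box \<times> box) set" where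
  "hgens m n l = {(a,b). a \<in> boxes m n l \<and> b \<in> boxes m n l \<and> col a = col b}"

definition kd :: "'a \<Rightarrow> 'a \<Rightarrow> complex" where
  "kd x y = (if x = y then 1 else 0)"

text \<open>Supercommutator relations of gl_{M|N} restricted to a spanning set S of
matrix units of a subalgebra:
 e_ab e_cd - (-1)^{(|a|+|b|)(|c|+|d|)} e_cd e_ab = delta_bc e_ad - (-1)^{...} delta_da e_cb.
U of the subalgebra = free algebra on S modulo the ideal generated by these.\<close>
definition super_rels :: "(nat \<Rightarrow> bool) \<Rightarrow> (box \<times> box) set \<Rightarrow> (box \<times> box) fa set" where
  "super_rels bb S = {(let sg = (-1::complex) ^ ((bpar bb a + bpar bb b) * (bpar bb c + bpar bb d))
       in fa_sub (fa_sub (fa_mult (fa_gen (a,b)) (fa_gen (c,d)))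
                         (fa_smult sg (fa_mult (fa_gen (c,d)) (fa_gen (a,b)))))
                 (fa_sub (fa_smult (kd b c) (fa_gen (a,d)))
                         (fa_smult (sg * kd d a) (fa_gen (c,b)))))
     | a b c d. (a,b) \<in> S \<and> (c,d) \<in> S}"

definition Uh_eq :: "nat \<Rightarrow> nat \<Rightarrow> nat \<Rightarrow> (nat \<Rightarrow> bool) \<Rightarrow> (box \<times> box) fa \<Rightarrow> (box \<times> box) fa \<Rightarrow> bool" where
  "Uh_eq m n l bb x y \<longleftrightarrow> fa_sub x y \<in> fa_ideal (super_rels bb (hgens m n l))"

definition rho :: "nat \<Rightarrow> nat \<Rightarrow> nat \<Rightarrow> nat \<Rightarrow> int" where
  "rho m n l c = - (int l - int c) * (int m - int n)"

text \<open>mu = eta o xi on generators of U(p); extended as algebra homomorphism.\<close>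
definition mu_gen :: "nat \<Rightarrow> nat \<Rightarrow> nat \<Rightarrow> (nat \<Rightarrow> bool) \<Rightarrow> box \<times> box \<Rightarrow> (box \<times> box) fa" where
  "mu_gen m n l bb g = (case g of (a,b) \<Rightarrow>
     if col a = col b then
       fa_sub (fa_gen (a,b)) (fa_const (kd a b * (-1) ^ bpar bb a * of_int (rho m n l (col a))))
     else fa_zero)"

definition mu :: "nat \<Rightarrow> nat \<Rightarrow> nat \<Rightarrow> (nat \<Rightarrow> bool) \<Rightarrow> (box \<times> box) fa \<Rightarrow> (box \<times> box) fa" where
  "mu m n l bb = fa_hom (mu_gen m n l bb)"

definition etil :: "nat \<Rightarrow> nat \<Rightarrow> nat \<Rightarrow> (nat \<Rightarrow> bool) \<Rightarrow> box \<Rightarrow> box \<Rightarrow> (box \<times> box) fa" where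
  "etil m n l bb a b = fa_smult ((-1) ^ (col b - col a))
      (fa_add (fa_gen (a,b)) (fa_const (kd a b * (-1) ^ bpar bb a * of_int (rho m n l (col a)))))"

definition tseqs :: "nat \<Rightarrow> nat \<Rightarrow> nat \<Rightarrow> nat \<Rightarrow> nat \<Rightarrow> nat \<Rightarrow> (box \<times> box) list set" where
  "tseqs m n l r i j = {ps.
      1 \<le> length ps \<and> length ps \<le> r \<and>
      (\<forall>p \<in> set ps. fst p \<in> boxes m n l \<and> snd p \<in> boxes m n l \<and> col (fst p) \<le> col (snd p)) \<and>
      (\<Sum>p\<leftarrow>ps. col (snd p) - col (fst p) + 1) = r \<and>
      (\<forall>t. Suc t < length ps \<longrightarrow>
           col (snd (ps ! t)) < col (fst (ps ! Suc t)) \<and> row (snd (ps ! t)) = row (fst (ps ! Suc t))) \<and>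
      row (fst (hd ps)) = i \<and> row (snd (last ps)) = j}"

definition tpoly :: "nat \<Rightarrow> nat \<Rightarrow> nat \<Rightarrow> (nat \<Rightarrow> bool) \<Rightarrow> nat \<Rightarrow> nat \<Rightarrow> nat \<Rightarrow> (box \<times> box) fa" where
  "tpoly m n l bb r i j = fa_sum
     (\<lambda>ps. fa_smult ((-1) ^ (\<Sum>p\<leftarrow>ps. bpar bb (fst p)))
                    (fa_prod (map (\<lambda>p. etil m n l bb (fst p) (snd p)) ps)))
     (tseqs m n l r i j)"

definition eh :: "nat \<Rightarrow> nat \<Rightarrow> nat \<Rightarrow> (box \<times> box) fa" where
  "eh c i j = fa_gen ((i,c),(j,c))"

definition rhs :: "nat \<Rightarrow> nat \<Rightarrow> nat \<Rightarrow> (nat \<Rightarrow> bool) \<Rightarrow> nat \<Rightarrow> nat \<Rightarrow> nat \<Rightarrow> (box \<times> box) fa" where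
  "rhs m n l bb r i j = fa_sum
     (\<lambda>(ss, is). let rows = i # is @ [j] in
        fa_smult ((-1) ^ (rpar bb i + (\<Sum>k\<leftarrow>is. rpar bb k)))
          (fa_prod (map (\<lambda>k. eh (ss ! k) (rows ! k) (rows ! Suc k)) [0..<r])))
     {(ss, is). length ss = r \<and> sorted_wrt (<) ss \<and> set ss \<subseteq> {1..l} \<and>
                length is = r - 1 \<and> set is \<subseteq> {1..m+n}}"

end

theory Submission imports Defs begin

definition splits :: "'a list \<Rightarrow> ('a list \<times> 'a list) set" where
  "splits w = {(u,v). u @ v = w}"

lemma splits_img: "splits w = (\<lambda>k. (take k w, drop k w)) ` {..length w}"
proof
  show "splits w \<subseteq> (\<lambda>k. (take k w, drop k w)) ` {..length w}"
  proof
    fix p assume "p \<in> splits w"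
    then obtain u v where p: "p = (u,v)" "u @ v = w" by (auto simp: splits_def)
    then show "p \<in> (\<lambda>k. (take k w, drop k w)) ` {..length w}"
      by (intro image_eqI[where x="length u"]) auto
  qed
qed (auto simp: splits_def)

lemma finite_splits[simp]: "finite (splits w)"
  by (simp add: splits_img)

lemma sum_splits: "(\<Sum>k\<le>length w. F (take k w) (drop k w)) = (\<Sum>p\<in>splits w. F (fst p) (snd p))"
proof (rule sum.reindex_bij_witness[where i="\<lambda>p. length (fst p)" and j="\<lambda>k. (take k w, drop k w)"])
  fix b assume "b \<in> splits w"
  then obtain u v where p: "b = (u,v)" "u @ v = w" by (auto simp: splits_def)
  then show "(take (length (fst b)) w, drop (length (fst b)) w) = b" "length (fst b) \<in> {..length w}"
    by auto
qed (auto simp: splits_def)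

lemma fa_mult_alt: "fa_mult f g w = (\<Sum>p\<in>splits w. f (fst p) * g (snd p))"
  unfolding fa_mult_def by (rule sum_splits)

lemma fa_mult_assoc: "fa_mult (fa_mult f g) h = fa_mult f (fa_mult g h)"
proof (rule ext)
  fix w
  have "fa_mult (fa_mult f g) h w = (\<Sum>p\<in>splits w. \<Sum>q\<in>splits (fst p). f (fst q) * g (snd q) * h (snd p))"
    by (simp add: fa_mult_alt sum_distrib_right)
  also have "\<dots> = (\<Sum>(p,q)\<in>Sigma (splits w) (\<lambda>p. splits (fst p)). f (fst q) * g (snd q) * h (snd p))"
    by (rule sum.Sigma) auto
  also have "\<dots> = (\<Sum>(p,q)\<in>Sigma (splits w) (\<lambda>p. splits (snd p)). f (fst p) * (g (fst q) * h (snd q)))"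
  proof (rule sum.reindex_bij_witness[where i="\<lambda>(p,q). ((fst p @ fst q, snd q), (fst p, fst q))"
          and j="\<lambda>(p,q). ((fst q, snd q @ snd p), (snd q, snd p))"])
    fix a assume "a \<in> Sigma (splits w) (\<lambda>p. splits (fst p))"
    then obtain x c u v where a: "a = ((x,c),(u,v))" "x @ c = w" "u @ v = x"
      by (auto simp: splits_def)
    show "(case (case a of (p, q) \<Rightarrow> ((fst q, snd q @ snd p), snd q, snd p)) of
          (p, q) \<Rightarrow> ((fst p @ fst q, snd q), fst p, fst q)) = a" using a by simp
    show "(case a of (p, q) \<Rightarrow> ((fst q, snd q @ snd p), snd q, snd p))
         \<in> Sigma (splits w) (\<lambda>p. splits (snd p))" using a by (auto simp: splits_def)
    show "(case (case a of (p, q) \<Rightarrow> ((fst q, snd q @ snd p), snd q, snd p)) of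
        (p, q) \<Rightarrow> f (fst p) * (g (fst q) * h (snd q))) =
       (case a of (p, q) \<Rightarrow> f (fst q) * g (snd q) * h (snd p))" using a by (simp add: mult.assoc)
  next
    fix b assume "b \<in> Sigma (splits w) (\<lambda>p. splits (snd p))"
    then obtain u y v c where b: "b = ((u,y),(v,c))" "u @ y = w" "v @ c = y"
      by (auto simp: splits_def)
    show "(case (case b of (p, q) \<Rightarrow> ((fst p @ fst q, snd q), fst p, fst q)) of
          (p, q) \<Rightarrow> ((fst q, snd q @ snd p), snd q, snd p)) = b" using b by simp
    show "(case b of (p, q) \<Rightarrow> ((fst p @ fst q, snd q), fst p, fst q))
         \<in> Sigma (splits w) (\<lambda>p. splits (fst p))" using b by (auto simp: splits_def)
  qed
  also have "\<dots> = (\<Sum>p\<in>splits w. \<Sum>q\<in>splits (snd p). f (fst p) * (g (fst q) * h (snd q)))"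
    by (rule sum.Sigma[symmetric]) auto
  also have "\<dots> = fa_mult f (fa_mult g h) w"
    by (simp add: fa_mult_alt sum_distrib_left)
  finally show "fa_mult (fa_mult f g) h w = fa_mult f (fa_mult g h) w" .
qed

lemma fa_mult_one_left[simp]: "fa_mult (fa_const 1) f = f"
proof (rule ext)
  fix w
  have "fa_mult (fa_const 1) f w = (\<Sum>k\<in>{0}. fa_const 1 (take k w) * f (drop k w))"
    unfolding fa_mult_def by (rule sum.mono_neutral_right) (auto simp: fa_const_def)
  then show "fa_mult (fa_const 1) f w = f w" by (simp add: fa_const_def)
qed

lemma fa_mult_one_right[simp]: "fa_mult f (fa_const 1) = f"
proof (rule ext)
  fix w
  have "fa_mult f (fa_const 1) w = (\<Sum>k\<in>{length w}. f (take k w) * fa_const 1 (drop k w))"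
    unfolding fa_mult_def by (rule sum.mono_neutral_right) (auto simp: fa_const_def)
  then show "fa_mult f (fa_const 1) w = f w" by (simp add: fa_const_def)
qed

lemma fa_mult_zero_left[simp]: "fa_mult fa_zero f = fa_zero"
  by (auto simp: fa_mult_def fa_zero_def)
lemma fa_mult_zero_right[simp]: "fa_mult f fa_zero = fa_zero"
  by (auto simp: fa_mult_def fa_zero_def)

definition supp :: "'g fa \<Rightarrow> 'g list set" where "supp f = {w. f w \<noteq> 0}"
definition Phi :: "('g \<Rightarrow> 'h fa) \<Rightarrow> 'g list \<Rightarrow> 'h fa" where "Phi \<phi> w = fa_prod (map \<phi> w)"

lemma Phi_Nil[simp]: "Phi \<phi> [] = fa_const 1" by (simp add: Phi_def fa_prod_def)
lemma Phi_Cons[simp]: "Phi \<phi> (x # w) = fa_mult (\<phi> x) (Phi \<phi> w)" by (simp add: Phi_def fa_prod_def)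
lemma Phi_append: "Phi \<phi> (u @ v) = fa_mult (Phi \<phi> u) (Phi \<phi> v)"
  by (induction u) (simp_all add: fa_mult_assoc)

lemma fa_prod_Nil[simp]: "fa_prod [] = fa_const 1" by (simp add: fa_prod_def)
lemma fa_prod_Cons[simp]: "fa_prod (x # xs) = fa_mult x (fa_prod xs)" by (simp add: fa_prod_def)

lemma fa_hom_eq:
  assumes "finite W" "supp f \<subseteq> W"
  shows "fa_hom \<phi> f x = (\<Sum>w\<in>W. f w * Phi \<phi> w x)"
  unfolding fa_hom_def fa_sum_def fa_smult_def Phi_def
  using assms by (intro sum.mono_neutral_left) (auto simp: supp_def)

lemma supp_mult: "supp (fa_mult f g) \<subseteq> (\<lambda>p. fst p @ snd p) ` (supp f \<times> supp g)"
proof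
  fix w assume "w \<in> supp (fa_mult f g)"
  then have "(\<Sum>p\<in>splits w. f (fst p) * g (snd p)) \<noteq> 0" by (simp add: supp_def fa_mult_alt)
  then obtain p where "p \<in> splits w" "f (fst p) * g (snd p) \<noteq> 0" by (meson sum.neutral)
  then show "w \<in> (\<lambda>p. fst p @ snd p) ` (supp f \<times> supp g)"
    by (intro image_eqI[where x=p]) (auto simp: splits_def supp_def)
qed

lemma fin_mult: "finite (supp f) \<Longrightarrow> finite (supp g) \<Longrightarrow> finite (supp (fa_mult f g))"
  by (rule finite_subset[OF supp_mult]) auto

lemma fin_add: "finite (supp f) \<Longrightarrow> finite (supp g) \<Longrightarrow> finite (supp (fa_add f g))"
  by (rule finite_subset[of _ "supp f \<union> supp g"]) (auto simp: supp_def fa_add_def)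
lemma fin_sub: "finite (supp f) \<Longrightarrow> finite (supp g) \<Longrightarrow> finite (supp (fa_sub f g))"
  by (rule finite_subset[of _ "supp f \<union> supp g"]) (auto simp: supp_def fa_sub_def)
lemma fin_smult: "finite (supp f) \<Longrightarrow> finite (supp (fa_smult c f))"
  by (rule finite_subset[of _ "supp f"]) (auto simp: supp_def fa_smult_def)
lemma fin_const: "finite (supp (fa_const c))"
  by (rule finite_subset[of _ "{[]}"]) (auto simp: supp_def fa_const_def)
lemma fin_gen: "finite (supp (fa_gen x))"
  by (rule finite_subset[of _ "{[x]}"]) (auto simp: supp_def fa_gen_def fa_word_def)
lemma fin_zero: "finite (supp fa_zero)"
  by (simp add: supp_def fa_zero_def)
lemma fin_sum: "finite A \<Longrightarrow> (\<And>a. a \<in> A \<Longrightarrow> finite (supp (F a))) \<Longrightarrow> finite (supp (fa_sum F A))"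
  by (rule finite_subset[of _ "\<Union>a\<in>A. supp (F a)"]) (auto simp: supp_def fa_sum_def intro: sum.neutral ccontr)
lemma fin_prod: "(\<And>f. f \<in> set xs \<Longrightarrow> finite (supp f)) \<Longrightarrow> finite (supp (fa_prod xs))"
  by (induction xs) (auto intro: fin_mult fin_const)

lemma hom_add: "finite (supp f) \<Longrightarrow> finite (supp g) \<Longrightarrow>
   fa_hom \<phi> (fa_add f g) = fa_add (fa_hom \<phi> f) (fa_hom \<phi> g)"
  apply (rule ext)
  apply (simp add: fa_add_def[of "fa_hom \<phi> f"] fa_hom_eq[of "supp f \<union> supp g"] )
  apply (subst fa_hom_eq[of "supp f \<union> supp g"], simp, fastforce simp: supp_def fa_add_def)
  apply (simp add: fa_add_def distrib_right sum.distrib)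
  done

lemma hom_smult: "finite (supp f) \<Longrightarrow> fa_hom \<phi> (fa_smult c f) = fa_smult c (fa_hom \<phi> f)"
  apply (rule ext)
  apply (simp add: fa_smult_def[of c "fa_hom \<phi> f"] fa_hom_eq[of "supp f"])
  apply (subst fa_hom_eq[of "supp f"], simp, fastforce simp: supp_def fa_smult_def)
  apply (simp add: fa_smult_def sum_distrib_left mult.assoc)
  done

lemma hom_const: "fa_hom \<phi> (fa_const c) = fa_const c"
proof (rule ext)
  fix x
  have "fa_hom \<phi> (fa_const c) x = (\<Sum>w\<in>{[]}. fa_const c w * Phi \<phi> w x)"
    by (rule fa_hom_eq) (auto simp: supp_def fa_const_def)
  then show "fa_hom \<phi> (fa_const c) x = fa_const c x" by (simp add: fa_const_def)
qed

lemma hom_zero: "fa_hom \<phi> fa_zero = fa_zero"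
  apply (rule ext)
  apply (subst fa_hom_eq[of "{}"], simp, fastforce simp: supp_def fa_zero_def)
  apply (simp add: fa_zero_def)
  done

lemma hom_gen: "fa_hom \<phi> (fa_gen g) = \<phi> g"
proof (rule ext)
  fix x
  have "fa_hom \<phi> (fa_gen g) x = (\<Sum>w\<in>{[g]}. fa_gen g w * Phi \<phi> w x)"
    by (rule fa_hom_eq) (auto simp: supp_def fa_gen_def fa_word_def)
  then show "fa_hom \<phi> (fa_gen g) x = \<phi> g x" by (simp add: fa_gen_def fa_word_def)
qed

lemma hom_sum: "finite A \<Longrightarrow> (\<And>a. a \<in> A \<Longrightarrow> finite (supp (F a))) \<Longrightarrow>
   fa_hom \<phi> (fa_sum F A) = fa_sum (\<lambda>a. fa_hom \<phi> (F a)) A"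
proof (rule ext)
  fix x assume A: "finite A" "\<And>a. a \<in> A \<Longrightarrow> finite (supp (F a))"
  let ?W = "\<Union>a\<in>A. supp (F a)"
  have fW: "finite ?W" using A by auto
  have "fa_hom \<phi> (fa_sum F A) x = (\<Sum>w\<in>?W. fa_sum F A w * Phi \<phi> w x)"
    by (rule fa_hom_eq[OF fW]) (auto simp: supp_def fa_sum_def intro: sum.neutral ccontr)
  also have "\<dots> = (\<Sum>a\<in>A. \<Sum>w\<in>?W. F a w * Phi \<phi> w x)"
    by (simp add: fa_sum_def sum_distrib_right sum.swap[of _ A])
  also have "\<dots> = (\<Sum>a\<in>A. fa_hom \<phi> (F a) x)"
    by (rule sum.cong[OF refl], rule fa_hom_eq[symmetric, OF fW]) auto
  finally show "fa_hom \<phi> (fa_sum F A) x = fa_sum (\<lambda>a. fa_hom \<phi> (F a)) A x"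
    by (simp add: fa_sum_def)
qed

lemma hom_mult:
  assumes ff: "finite (supp f)" and fg: "finite (supp g)"
  shows "fa_hom \<phi> (fa_mult f g) = fa_mult (fa_hom \<phi> f) (fa_hom \<phi> g)"
proof (rule ext)
  fix x
  let ?A = "supp f" and ?B = "supp g"
  let ?cat = "\<lambda>p::'a list \<times> 'a list. fst p @ snd p"
  let ?W = "?cat ` (?A \<times> ?B)"
  have fAB: "finite (?A \<times> ?B)" using ff fg by auto
  have mw: "fa_mult f g w = (\<Sum>p\<in>{p\<in>?A \<times> ?B. ?cat p = w}. f (fst p) * g (snd p))" for w
  proof -
    have "fa_mult f g w = (\<Sum>p\<in>splits w. f (fst p) * g (snd p))" by (rule fa_mult_alt)
    also have "\<dots> = (\<Sum>p\<in>{p\<in>?A \<times> ?B. ?cat p = w}. f (fst p) * g (snd p))"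
      by (rule sum.mono_neutral_right) (simp, auto simp: splits_def supp_def)
    finally show ?thesis .
  qed
  have "fa_hom \<phi> (fa_mult f g) x = (\<Sum>w\<in>?W. fa_mult f g w * Phi \<phi> w x)"
    by (rule fa_hom_eq) (use fAB supp_mult in auto)
  also have "\<dots> = (\<Sum>w\<in>?W. \<Sum>p\<in>{p\<in>?A \<times> ?B. ?cat p = w}. f (fst p) * g (snd p) * Phi \<phi> (?cat p) x)"
    by (simp add: mw sum_distrib_right)
  also have "\<dots> = (\<Sum>p\<in>?A \<times> ?B. f (fst p) * g (snd p) * Phi \<phi> (?cat p) x)"
    by (rule sum.image_gen[symmetric, OF fAB])
  also have "\<dots> = (\<Sum>u\<in>?A. \<Sum>v\<in>?B. f u * g v * (\<Sum>k\<le>length x. Phi \<phi> u (take k x) * Phi \<phi> v (drop k x)))"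
    by (simp add: sum.cartesian_product Phi_append fa_mult_def split_def)
  also have "\<dots> = (\<Sum>k\<le>length x. (\<Sum>u\<in>?A. f u * Phi \<phi> u (take k x)) * (\<Sum>v\<in>?B. g v * Phi \<phi> v (drop k x)))"
    unfolding sum_product by (simp add: sum_distrib_left sum.swap[of _ "{..length x}"] mult_ac)
  also have "\<dots> = fa_mult (fa_hom \<phi> f) (fa_hom \<phi> g) x"
    unfolding fa_mult_def
    by (simp add: fa_hom_eq[OF ff order_refl] fa_hom_eq[OF fg order_refl])
  finally show "fa_hom \<phi> (fa_mult f g) x = fa_mult (fa_hom \<phi> f) (fa_hom \<phi> g) x" .
qed

lemma hom_prod: "(\<And>f. f \<in> set xs \<Longrightarrow> finite (supp f)) \<Longrightarrow>
  fa_hom \<phi> (fa_prod xs) = fa_prod (map (fa_hom \<phi>) xs)"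
  by (induction xs) (auto simp: hom_const hom_mult fin_prod)

definition Gmap :: "nat \<Rightarrow> nat \<Rightarrow> nat \<Rightarrow> nat list \<times> nat list \<Rightarrow> (box \<times> box) list" where
  "Gmap r i j q = map (\<lambda>k. (((i # snd q @ [j]) ! k, fst q ! k), ((i # snd q @ [j]) ! Suc k, fst q ! k))) [0..<r]"

definition Sset :: "nat \<Rightarrow> nat \<Rightarrow> nat \<Rightarrow> nat \<Rightarrow> (nat list \<times> nat list) set" where
  "Sset m n l r = {(ss, is). length ss = r \<and> sorted_wrt (<) ss \<and> set ss \<subseteq> {1..l} \<and>
                length is = r - 1 \<and> set is \<subseteq> {1..m+n}}"

definition Tset :: "nat \<Rightarrow> nat \<Rightarrow> nat \<Rightarrow> nat \<Rightarrow> nat \<Rightarrow> nat \<Rightarrow> (box \<times> box) list set" where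
  "Tset m n l r i j = {ps \<in> tseqs m n l r i j. \<forall>p\<in>set ps. col (fst p) = col (snd p)}"

definition Hinv :: "(box \<times> box) list \<Rightarrow> nat list \<times> nat list" where
  "Hinv ps = (map (\<lambda>p. col (fst p)) ps, map (\<lambda>p. row (fst p)) (tl ps))"

lemma rows_nth_lt: "length is = r - 1 \<Longrightarrow> k < r \<Longrightarrow>
   (i # is @ [j]) ! k = (if k = 0 then i else is ! (k - 1))"
  by (cases k) (auto simp: nth_append)

lemma rows_nth_r: "length is = r - 1 \<Longrightarrow> 1 \<le> r \<Longrightarrow> (i # is @ [j]) ! r = j"
  by (cases r) (auto simp: nth_append)

lemma sum_list_ones: "(\<And>p. p \<in> set ps \<Longrightarrow> f p = (1::nat)) \<Longrightarrow> (\<Sum>p\<leftarrow>ps. f p) = length ps"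
  by (induction ps) auto

lemma G_in:
  assumes q: "q \<in> Sset m n l r" and r: "1 \<le> r"
    and ij: "i \<in> {1..m+n}" "j \<in> {1..m+n}"
  shows "Gmap r i j q \<in> Tset m n l r i j"
proof -
  obtain ss "is" where qq: "q = (ss, is)" by (cases q)
  note S = q[unfolded qq Sset_def, simplified]
  let ?rows = "i # is @ [j]"
  let ?ps = "Gmap r i j q"
  have len: "length ?ps = r" by (simp add: Gmap_def)
  have nth: "?ps ! k = ((?rows ! k, ss ! k), (?rows ! Suc k, ss ! k))" if "k < r" for k
    using that by (simp add: Gmap_def qq)
  have rowsin: "?rows ! k \<in> {1..m+n}" if "k \<le> r" for k
  proof -
    have "k < length ?rows" using that S by simp
    then have "?rows ! k \<in> set ?rows" by (rule nth_mem)
    then show ?thesis using S ij by auto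
  qed
  have ssin: "ss ! k \<in> {1..l}" if "k < r" for k
  proof -
    have "ss ! k \<in> set ss" using S that by simp
    then show ?thesis using S by fastforce
  qed
  have colsame: "\<forall>p\<in>set ?ps. col (fst p) = col (snd p)"
    by (auto simp: Gmap_def col_def)
  have inb: "\<forall>p\<in>set ?ps. fst p \<in> boxes m n l \<and> snd p \<in> boxes m n l \<and> col (fst p) \<le> col (snd p)"
  proof
    fix p assume "p \<in> set ?ps"
    then obtain k where k: "k < r" "p = ?ps ! k" using len by (metis in_set_conv_nth)
    show "fst p \<in> boxes m n l \<and> snd p \<in> boxes m n l \<and> col (fst p) \<le> col (snd p)"
      using k nth[OF k(1)] rowsin[of k] rowsin[of "Suc k"] ssin[OF k(1)]
      by (auto simp: boxes_def col_def)
  qed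
  have sum: "(\<Sum>p\<leftarrow>?ps. col (snd p) - col (fst p) + 1) = r"
    using colsame len by (subst sum_list_ones) auto
  have adj: "\<forall>t. Suc t < length ?ps \<longrightarrow>
           col (snd (?ps ! t)) < col (fst (?ps ! Suc t)) \<and> row (snd (?ps ! t)) = row (fst (?ps ! Suc t))"
  proof (intro allI impI)
    fix t assume t: "Suc t < length ?ps"
    have "ss ! t < ss ! Suc t" using S t len by (auto intro: sorted_wrt_nth_less)
    then show "col (snd (?ps ! t)) < col (fst (?ps ! Suc t)) \<and> row (snd (?ps ! t)) = row (fst (?ps ! Suc t))"
      using t len nth[of t] nth[of "Suc t"] by (simp add: col_def row_def)
  qed
  have hd: "row (fst (hd ?ps)) = i"
  proof -
    have "?ps \<noteq> []" using len r by auto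
    then have "hd ?ps = ?ps ! 0" by (simp add: hd_conv_nth)
    then show ?thesis using nth[of 0] r by (simp add: row_def)
  qed
  have last: "row (snd (last ?ps)) = j"
  proof -
    have "?ps \<noteq> []" using len r by auto
    then have "last ?ps = ?ps ! (r - 1)" using len by (simp add: last_conv_nth)
    then show ?thesis using nth[of "r-1"] r rows_nth_r[of "is" r i j] S by (simp add: row_def)
  qed
  show ?thesis unfolding Tset_def tseqs_def
    using len r inb sum adj hd last colsame by simp
qed


lemma T_props:
  assumes ps: "ps \<in> Tset m n l r i j"
  shows "length ps = r" "1 \<le> r"
    "\<And>p. p \<in> set ps \<Longrightarrow> fst p \<in> boxes m n l \<and> snd p \<in> boxes m n l \<and> col (fst p) = col (snd p)"
    "\<And>t. Suc t < length ps \<Longrightarrow>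
           col (snd (ps ! t)) < col (fst (ps ! Suc t)) \<and> row (snd (ps ! t)) = row (fst (ps ! Suc t))"
    "row (fst (ps ! 0)) = i" "row (snd (ps ! (r - 1))) = j"
proof -
  note P = ps[unfolded Tset_def tseqs_def, simplified]
  have "(\<Sum>p\<leftarrow>ps. col (snd p) - col (fst p) + 1) = length ps"
    using P by (subst sum_list_ones) auto
  then show len: "length ps = r" using P by simp
  show "1 \<le> r" using P len by simp
  show "\<And>p. p \<in> set ps \<Longrightarrow> fst p \<in> boxes m n l \<and> snd p \<in> boxes m n l \<and> col (fst p) = col (snd p)"
    using P by auto
  show "\<And>t. Suc t < length ps \<Longrightarrow>
           col (snd (ps ! t)) < col (fst (ps ! Suc t)) \<and> row (snd (ps ! t)) = row (fst (ps ! Suc t))"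
    using P by auto
  show "row (fst (ps ! 0)) = i" using P by (cases ps) auto
  show "row (snd (ps ! (r - 1))) = j"
  proof -
    have "ps \<noteq> []" using len P by auto
    then have "last ps = ps ! (r - 1)" by (simp add: last_conv_nth len)
    then show ?thesis using P by simp
  qed
qed

lemma H_in:
  assumes ps: "ps \<in> Tset m n l r i j"
  shows "Hinv ps \<in> Sset m n l r"
proof -
  note TP = T_props[OF ps]
  have srt: "sorted_wrt (<) (map (\<lambda>p. col (fst p)) ps)"
  proof (subst sorted_wrt_iff_nth_Suc_transp)
    show "transp ((<) :: nat \<Rightarrow> _ )" by (simp add: transp_def)
    show "\<forall>t. Suc t < length (map (\<lambda>p. col (fst p)) ps) \<longrightarrow>
         map (\<lambda>p. col (fst p)) ps ! t < map (\<lambda>p. col (fst p)) ps ! Suc t"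
    proof (intro allI impI)
      fix t assume t: "Suc t < length (map (\<lambda>p. col (fst p)) ps)"
      then have "t < length ps" "Suc t < length ps" by auto
      then show "map (\<lambda>p. col (fst p)) ps ! t < map (\<lambda>p. col (fst p)) ps ! Suc t"
        using TP(3)[OF nth_mem[of t ps]] TP(4)[of t] by simp
    qed
  qed
  have s1: "set (map (\<lambda>p. col (fst p)) ps) \<subseteq> {1..l}"
    using TP(3) by (auto simp: boxes_def col_def)
  have s2: "set (map (\<lambda>p. row (fst p)) (tl ps)) \<subseteq> {1..m+n}"
  proof
    fix x assume "x \<in> set (map (\<lambda>p. row (fst p)) (tl ps))"
    then obtain p where p: "p \<in> set (tl ps)" "x = row (fst p)" by auto
    have "set (tl ps) \<subseteq> set ps" by (cases ps) auto
    then have "p \<in> set ps" using p by auto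
    then have "fst p \<in> boxes m n l" using TP(3)[of p] by simp
    then show "x \<in> {1..m+n}" using p by (auto simp: boxes_def row_def)
  qed
  show ?thesis unfolding Hinv_def Sset_def using TP(1) srt s1 s2 by simp
qed

lemma box_eq: "(a::box) = (row a, col a)" by (simp add: row_def col_def)

lemma GH:
  assumes ps: "ps \<in> Tset m n l r i j"
  shows "Gmap r i j (Hinv ps) = ps"
proof -
  note TP = T_props[OF ps]
  let ?is = "map (\<lambda>p. row (fst p)) (tl ps)"
  have lis: "length ?is = r - 1" using TP(1) by simp
  show ?thesis
  proof (rule nth_equalityI)
    show "length (Gmap r i j (Hinv ps)) = length ps" using TP(1) by (simp add: Gmap_def)
    fix k assume "k < length (Gmap r i j (Hinv ps))"
    then have k: "k < r" by (simp add: Gmap_def)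
    have r1: "(i # ?is @ [j]) ! k = row (fst (ps ! k))"
      using rows_nth_lt[OF lis k] TP(5) k TP(1) by (auto simp: nth_tl)
    have r2: "(i # ?is @ [j]) ! Suc k = row (snd (ps ! k))"
    proof (cases "Suc k < r")
      case True
      then show ?thesis using rows_nth_lt[OF lis True] TP(4)[of k] TP(1) by (auto simp: nth_tl)
    next
      case False
      then have "Suc k = r" using k by simp
      then show ?thesis using rows_nth_r[OF lis TP(2)] TP(6) by auto
    qed
    have c: "col (fst (ps ! k)) = col (snd (ps ! k))"
      using TP(3)[OF nth_mem[of k ps]] TP(1) k by simp
    show "Gmap r i j (Hinv ps) ! k = ps ! k"
      using k r1 r2 c TP(1)
      by (simp add: Gmap_def Hinv_def) (metis box_eq prod.collapse)
  qed
qed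

lemma HG:
  assumes q: "q \<in> Sset m n l r" and r: "1 \<le> r"
  shows "Hinv (Gmap r i j q) = q"
proof -
  obtain ss "is" where qq: "q = (ss, is)" by (cases q)
  note S = q[unfolded qq Sset_def, simplified]
  have a: "map (\<lambda>p. col (fst p)) (Gmap r i j q) = ss"
    by (rule nth_equalityI) (use S in \<open>auto simp: Gmap_def qq col_def\<close>)
  have b: "map (\<lambda>p. row (fst p)) (tl (Gmap r i j q)) = is"
  proof (rule nth_equalityI)
    show "length (map (\<lambda>p. row (fst p)) (tl (Gmap r i j q))) = length is" using S by (simp add: Gmap_def)
    fix k assume "k < length (map (\<lambda>p. row (fst p)) (tl (Gmap r i j q)))"
    then have k: "Suc k < r" by (simp add: Gmap_def)
    have e: "tl (Gmap r i j q) ! k = Gmap r i j q ! Suc k"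
      using k by (intro nth_tl) (simp add: Gmap_def)
    have e2: "Gmap r i j q ! Suc k = (((i # is @ [j]) ! Suc k, ss ! Suc k), ((i # is @ [j]) ! Suc (Suc k), ss ! Suc k))"
      using k by (simp only: Gmap_def qq nth_map_upt) simp
    have kl: "k < length is" using k S by simp
    have e3: "(i # is @ [j]) ! Suc k = is ! k" using kl by (simp add: nth_append)
    have "k < length (tl (Gmap r i j q))" using k by (simp add: Gmap_def)
    then show "map (\<lambda>p. row (fst p)) (tl (Gmap r i j q)) ! k = is ! k"
      using e e2 e3 by (simp add: row_def)
  qed
  show ?thesis using a b qq by (simp add: Hinv_def)
qed


lemma fa_sum_cong: "(\<And>a. a \<in> A \<Longrightarrow> F a = G a) \<Longrightarrow> fa_sum F A = fa_sum G A"
  by (auto simp: fa_sum_def intro!: ext sum.cong)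

lemma prod_zero: "fa_zero \<in> set xs \<Longrightarrow> fa_prod xs = fa_zero"
  by (induction xs) auto

lemma hom_etil: "fa_hom (mu_gen m n l bb) (etil m n l bb a b) =
   (if col a = col b then fa_gen (a,b) else fa_zero)"
proof -
  have "fa_hom (mu_gen m n l bb) (etil m n l bb a b) =
    fa_smult ((-1) ^ (col b - col a)) (fa_add (mu_gen m n l bb (a,b))
      (fa_const (kd a b * (-1) ^ bpar bb a * of_int (rho m n l (col a)))))"
    unfolding etil_def
    by (simp add: hom_smult hom_add hom_gen hom_const fin_add fin_gen fin_const)
  then show ?thesis
    by (auto simp: mu_gen_def fa_smult_def fa_add_def fa_sub_def fa_const_def fa_zero_def kd_def intro!: ext)
qed

lemma hom_etil': "fa_hom (mu_gen m n l bb) (etil m n l bb (fst p) (snd p)) =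
   (if col (fst p) = col (snd p) then fa_gen p else fa_zero)"
  by (simp add: hom_etil)

lemma fin_etil: "finite (supp (etil m n l bb a b))"
  unfolding etil_def by (intro fin_smult fin_add fin_gen fin_const)

lemma finite_tseqs: "finite (tseqs m n l r i j)"
proof (rule finite_subset)
  show "tseqs m n l r i j \<subseteq> {xs. set xs \<subseteq> boxes m n l \<times> boxes m n l \<and> length xs \<le> r}"
    by (auto simp: tseqs_def)
  show "finite {xs. set xs \<subseteq> boxes m n l \<times> boxes m n l \<and> length xs \<le> r}"
    by (rule finite_lists_length_le) (simp add: boxes_def)
qed

lemma rows_map: "length is = r - 1 \<Longrightarrow> 1 \<le> r \<Longrightarrow> map (\<lambda>k. (i # is @ [j]) ! k) [0..<r] = i # is"
  by (rule nth_equalityI) (auto simp: rows_nth_lt nth_Cons' nth_append)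

theorem lemma4p3:
  fixes m n l r i j :: nat and bb :: "nat \<Rightarrow> bool"
  assumes "card {k \<in> {1..m+n}. bb k} = n"
    and "1 \<le> i" "i \<le> m + n" "1 \<le> j" "j \<le> m + n"
    and "1 \<le> r" "r \<le> l"
  shows "Uh_eq m n l bb (mu m n l bb (tpoly m n l bb r i j)) (rhs m n l bb r i j)"
proof -
  let ?\<phi> = "mu_gen m n l bb"
  let ?T = "tseqs m n l r i j"
  let ?sg = "\<lambda>ps. (-1::complex) ^ (\<Sum>p\<leftarrow>ps. bpar bb (fst p))"
  let ?F = "\<lambda>ps. fa_smult (?sg ps) (fa_prod (map fa_gen ps))"
  have r: "1 \<le> r" using assms by simp
  have st1: "mu m n l bb (tpoly m n l bb r i j) = fa_sum (\<lambda>ps. fa_smult (?sg ps)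
      (fa_prod (map (\<lambda>p. if col (fst p) = col (snd p) then fa_gen p else fa_zero) ps))) ?T"
    unfolding mu_def tpoly_def
    apply (subst hom_sum[OF finite_tseqs])
     apply (intro fin_smult fin_prod, auto simp: fin_etil)[1]
    apply (rule fa_sum_cong)
    apply (subst hom_smult, intro fin_prod, auto simp: fin_etil)[1]
    apply (subst hom_prod)
     apply (auto simp: fin_etil)[1]
    apply (simp only: map_map comp_def hom_etil')
    done
  also have "\<dots> = fa_sum ?F (Tset m n l r i j)"
  proof (rule ext)
    fix x
    show "fa_sum (\<lambda>ps. fa_smult (?sg ps)
      (fa_prod (map (\<lambda>p. if col (fst p) = col (snd p) then fa_gen p else fa_zero) ps))) ?T x
      = fa_sum ?F (Tset m n l r i j) x"
      unfolding fa_sum_def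
    proof (rule sum.mono_neutral_cong_right)
      show "finite ?T" by (rule finite_tseqs)
      show "Tset m n l r i j \<subseteq> ?T" by (auto simp: Tset_def)
    next
      show "\<forall>ps\<in>?T - Tset m n l r i j. fa_smult (?sg ps) (fa_prod (map (\<lambda>p. if col (fst p) = col (snd p) then fa_gen p else fa_zero) ps)) x = 0"
      proof
      fix ps assume "ps \<in> ?T - Tset m n l r i j"
      then obtain p where "p \<in> set ps" "col (fst p) \<noteq> col (snd p)" by (auto simp: Tset_def)
      then have "fa_zero \<in> set (map (\<lambda>p. if col (fst p) = col (snd p) then fa_gen p else fa_zero) ps)"
        by (force)
      then show "fa_smult (?sg ps) (fa_prod (map (\<lambda>p. if col (fst p) = col (snd p) then fa_gen p else fa_zero) ps)) x = 0"
        by (simp add: prod_zero fa_smult_def fa_zero_def)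
      qed
    next
      fix ps assume "ps \<in> Tset m n l r i j"
      then have eqm: "map (\<lambda>p. if col (fst p) = col (snd p) then fa_gen p else fa_zero) ps = map fa_gen ps"
        by (auto simp: Tset_def)
      then show "fa_smult (?sg ps) (fa_prod (map (\<lambda>p. if col (fst p) = col (snd p) then fa_gen p else fa_zero) ps)) x
          = ?F ps x" by (simp only: eqm)
    qed
  qed
  also have "Tset m n l r i j = Gmap r i j ` Sset m n l r"
  proof
    show "Tset m n l r i j \<subseteq> Gmap r i j ` Sset m n l r"
    proof
      fix ps assume "ps \<in> Tset m n l r i j"
      then show "ps \<in> Gmap r i j ` Sset m n l r"
        using GH H_in by (metis image_eqI)
    qed
    show "Gmap r i j ` Sset m n l r \<subseteq> Tset m n l r i j"
      using G_in[OF _ r, of _ m n l i j] assms by auto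
  qed
  also have "fa_sum ?F (Gmap r i j ` Sset m n l r) = fa_sum (?F \<circ> Gmap r i j) (Sset m n l r)"
  proof -
    have inj: "inj_on (Gmap r i j) (Sset m n l r)"
      by (rule inj_on_inverseI[where g=Hinv]) (rule HG[OF _ r])
    show ?thesis unfolding fa_sum_def by (intro ext) (simp add: sum.reindex[OF inj])
  qed
  also have "\<dots> = rhs m n l bb r i j"
    unfolding rhs_def Sset_def[symmetric]
  proof (rule fa_sum_cong)
    fix q assume q: "q \<in> Sset m n l r"
    obtain ss "is" where qq: "q = (ss, is)" by (cases q)
    have lis: "length is = r - 1" using q qq by (simp add: Sset_def)
    have sg: "(\<Sum>p\<leftarrow>Gmap r i j q. bpar bb (fst p)) = rpar bb i + (\<Sum>k\<leftarrow>is. rpar bb k)"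
    proof -
      have "(\<Sum>p\<leftarrow>Gmap r i j q. bpar bb (fst p)) = (\<Sum>k\<leftarrow>map (\<lambda>k. (i # is @ [j]) ! k) [0..<r]. rpar bb k)"
        by (simp add: Gmap_def qq bpar_def row_def comp_def)
      also have "\<dots> = rpar bb i + (\<Sum>k\<leftarrow>is. rpar bb k)" by (simp add: rows_map[OF lis r])
      finally show ?thesis .
    qed
    show "(?F \<circ> Gmap r i j) q = (case q of (ss, is) \<Rightarrow> let rows = i # is @ [j] in
        fa_smult ((-1) ^ (rpar bb i + (\<Sum>k\<leftarrow>is. rpar bb k)))
          (fa_prod (map (\<lambda>k. eh (ss ! k) (rows ! k) (rows ! Suc k)) [0..<r])))"
      using sg by (simp add: qq Gmap_def eh_def comp_def)
  qed
  finally have eq: "mu m n l bb (tpoly m n l bb r i j) = rhs m n l bb r i j" .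
  have "fa_sub (rhs m n l bb r i j) (rhs m n l bb r i j) = fa_zero"
    by (simp add: fa_sub_def fa_zero_def)
  then show ?thesis unfolding Uh_eq_def eq by (simp add: fa_ideal.zero)
qed

end
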